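(* Assume the Setup (for a single $n$). Fix an even integer $r\ge0$. Let $\mathcal T\subset U$ and $o\in V$ be such that $\mathbb P^H(\mathcal T)>0$ and $B_{\mathcal T}(o,r)$ is a valid rooted tree $(T,o)$ with $|V(T)|<d$. Then the height of $T$ equals $r$ and $m(I(T),T)>0$.
   Context: Setup. $k\ge 1$ is an integer and $d$ a positive integer. $G=(V,U,E)$ is a finite simple bipartite graph with parts $V$ and $U$ and edge set $E$, which is $C_4$-free (any two distinct vertices have at most one common neighbour) and $(d,k+1)$-bi-regular (every $v\in V$ has degree $d$ and every $u\in U$ has degree $k+1$). $B$ is a signed adjacency matrix of $G$: the real $V\times U$ matrix with $B_{v,u}\in\{1,-1\}$ if $vu\in E$ and $B_{v,u}=0$ otherwise. $H\subset\mathbb R^U$ is the row space of $B$ and $P_H$ the orthogonal projection onto $H$. The determinantal measure $\mathbb P^H$ is the probability measure on subsets $\mathcal S\subset U$ of size $\operatorname{rank}B$ given by $\mathbb P^H(\mathcal S)=\det(P_H|_{\mathcal S})$, where $P_H|_{\mathcal S}$ is the principal submatrix indexed by $\mathcal S$. For $\mathcal S\subset U$, $G[\mathcal S]$ denotes the subgraph of $G$ induced by $\mathcal S\cup N_G(\mathcal S)$. For $v\in V$ and an integer $r\ge 0$, $B_{\mathcal S}(v,r)$ denotes the rooted ball of radius $r$ around $v$ in $G[\mathcal S]$ (rooted at $v$). Trees. For a finite rooted tree $(T,o)$, the height of a vertex is its distance from $o$ and the height of $T$ is the maximal height of a vertex. Vertices of even (odd) height are called even (odd); $V(T)$ and $U(T)$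 denote the sets of even and odd vertices. $(T,o)$ is valid if its height is even and every odd vertex has degree exactly $k+1$ in $T$. $I(T)\subset V(T)$ is the set of even vertices of height strictly smaller than the height of $T$. For $K\subset V(T)$, $m(K,T)$ is the number of matchings of $T$ in which every vertex of $K\cup U(T)$ is saturated. *)

theory Defs
  imports "HOL-Analysis.Analysis" "HOL-Combinatorics.Permutations"
begin

text \<open>Vectors in R^U are modelled as real^'u, with U the finite type 'u; matrices V x U
  as real^'u^'v (rows indexed by V).\<close>

definition row_space :: "real^'u^'v \<Rightarrow> (real^'u) set" where
  "row_space B = span (rows B)"

definition proj_matrix :: "(real^'u::finite) set \<Rightarrow> real^'u^'u" where
  "proj_matrix H = (THE P. \<forall>x. P *v x \<in> H \<and> (\<forall>h\<in>H. inner (x - P *v x) h = 0))"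

definition principal_det :: "real^'u^'u \<Rightarrow> 'u set \<Rightarrow> real" where
  "principal_det M S = (\<Sum>p\<in>{p. p permutes S}. of_int (sign p) * (\<Prod>i\<in>S. M $ i $ p i))"

definition det_measure :: "real^'u^'v \<Rightarrow> 'u set \<Rightarrow> real" where
  "det_measure B S = (if card S = rank B then principal_det (proj_matrix (row_space B)) S else 0)"

definition walk_in :: "'a set \<Rightarrow> ('a \<Rightarrow> 'a \<Rightarrow> bool) \<Rightarrow> 'a list \<Rightarrow> bool" where
  "walk_in W A xs \<longleftrightarrow> xs \<noteq> [] \<and> set xs \<subseteq> W \<and> (\<forall>i. Suc i < length xs \<longrightarrow> A (xs ! i) (xs ! Suc i))"

definition conn_within :: "'a set \<Rightarrow> ('a \<Rightarrow> 'a \<Rightarrow> bool) \<Rightarrow> nat \<Rightarrow> 'a \<Rightarrow> 'a \<Rightarrow> bool" where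
  "conn_within W A n x y \<longleftrightarrow> (\<exists>xs. walk_in W A xs \<and> hd xs = x \<and> last xs = y \<and> length xs = Suc n)"

definition gdist :: "'a set \<Rightarrow> ('a \<Rightarrow> 'a \<Rightarrow> bool) \<Rightarrow> 'a \<Rightarrow> 'a \<Rightarrow> nat" where
  "gdist W A x y = (LEAST n. conn_within W A n x y)"

definition connected_graph :: "'a set \<Rightarrow> ('a \<Rightarrow> 'a \<Rightarrow> bool) \<Rightarrow> bool" where
  "connected_graph W A \<longleftrightarrow> (\<forall>x\<in>W. \<forall>y\<in>W. \<exists>n. conn_within W A n x y)"

definition has_cycle :: "'a set \<Rightarrow> ('a \<Rightarrow> 'a \<Rightarrow> bool) \<Rightarrow> bool" where
  "has_cycle W A \<longleftrightarrow> (\<exists>xs. walk_in W A xs \<and> distinct xs \<and> length xs \<ge> 3 \<and> A (last xs) (hd xs))"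

definition is_tree :: "'a set \<Rightarrow> ('a \<Rightarrow> 'a \<Rightarrow> bool) \<Rightarrow> bool" where
  "is_tree W A \<longleftrightarrow> finite W \<and> W \<noteq> {} \<and> connected_graph W A \<and> \<not> has_cycle W A"

definition tree_height :: "'a set \<Rightarrow> ('a \<Rightarrow> 'a \<Rightarrow> bool) \<Rightarrow> 'a \<Rightarrow> nat" where
  "tree_height W  A rt = Max (gdist W  A rt ` W)"

definition even_vertices :: "'a set \<Rightarrow> ('a \<Rightarrow> 'a \<Rightarrow> bool) \<Rightarrow> 'a \<Rightarrow> 'a set" where
  "even_vertices W  A rt = {x\<in>W. even (gdist W  A rt x)}"

definition odd_vertices :: "'a set \<Rightarrow> ('a \<Rightarrow> 'a \<Rightarrow> bool) \<Rightarrow> 'a \<Rightarrow> 'a set" where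
  "odd_vertices W  A rt = {x\<in>W. odd (gdist W  A rt x)}"

definition degree_in :: "'a set \<Rightarrow> ('a \<Rightarrow> 'a \<Rightarrow> bool) \<Rightarrow> 'a \<Rightarrow> nat" where
  "degree_in W A x = card {y\<in>W. A x y}"

definition valid_tree :: "nat \<Rightarrow> 'a set \<Rightarrow> ('a \<Rightarrow> 'a \<Rightarrow> bool) \<Rightarrow> 'a \<Rightarrow> bool" where
  "valid_tree k W  A rt \<longleftrightarrow> is_tree W A \<and> rt \<in> W \<and> even (tree_height W A rt) \<and>
     (\<forall>x\<in>odd_vertices W A rt. degree_in W A x = k + 1)"

definition I_set :: "'a set \<Rightarrow> ('a \<Rightarrow> 'a \<Rightarrow> bool) \<Rightarrow> 'a \<Rightarrow> 'a set" where
  "I_set W  A rt = {x\<in>even_vertices W A rt. gdist W  A rt x < tree_height W A rt}"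

definition graph_edges :: "'a set \<Rightarrow> ('a \<Rightarrow> 'a \<Rightarrow> bool) \<Rightarrow> 'a set set" where
  "graph_edges W A = {{x, y} | x y. x \<in> W \<and> y \<in> W \<and> A x y}"

definition is_matching :: "'a set \<Rightarrow> ('a \<Rightarrow> 'a \<Rightarrow> bool) \<Rightarrow> 'a set set \<Rightarrow> bool" where
  "is_matching W A M \<longleftrightarrow> M \<subseteq> graph_edges W A \<and> (\<forall>e1\<in>M. \<forall>e2\<in>M. e1 \<noteq> e2 \<longrightarrow> e1 \<inter> e2 = {})"

text \<open>m(K,T): number of matchings of T saturating every vertex of K \<union> U(T).\<close>
definition m_count :: "'a set \<Rightarrow> 'a set \<Rightarrow> ('a \<Rightarrow> 'a \<Rightarrow> bool) \<Rightarrow> 'a \<Rightarrow> nat" where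
  "m_count K W  A rt = card {M. is_matching W A M \<and>
      (\<forall>x\<in>K \<union> odd_vertices W A rt. \<exists>e\<in>M. x \<in> e)}"

section \<open>The bipartite graph G = (V,U,E), with V = UNIV::'v, U = UNIV::'u\<close>

definition C4_free :: "('v \<Rightarrow> 'u \<Rightarrow> bool) \<Rightarrow> bool" where
  "C4_free E \<longleftrightarrow> (\<forall>v1 v2. v1 \<noteq> v2 \<longrightarrow> card {u. E v1 u \<and> E v2 u} \<le> 1) \<and>
                  (\<forall>u1 u2. u1 \<noteq> u2 \<longrightarrow> card {v. E v u1 \<and> E v u2} \<le> 1)"

definition biregular :: "nat \<Rightarrow> nat \<Rightarrow> ('v \<Rightarrow> 'u \<Rightarrow> bool) \<Rightarrow> bool" where
  "biregular a b E \<longleftrightarrow> (\<forall>v. card {u. E v u} = a) \<and> (\<forall>u. card {v. E v u} = b)"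

definition signed_adjacency :: "('v \<Rightarrow> 'u \<Rightarrow> bool) \<Rightarrow> real^'u^'v \<Rightarrow> bool" where
  "signed_adjacency E B \<longleftrightarrow> (\<forall>v u. (E v u \<longrightarrow> B $ v $ u \<in> {1, -1}) \<and> (\<not> E v u \<longrightarrow> B $ v $ u = 0))"

text \<open>Adjacency of G[S] (induced on S \<union> N_G(S)) on the disjoint union V + U.\<close>
fun adj_S :: "('v \<Rightarrow> 'u \<Rightarrow> bool) \<Rightarrow> 'u set \<Rightarrow> 'v + 'u \<Rightarrow> 'v + 'u \<Rightarrow> bool" where
  "adj_S E S (Inl v) (Inr u) \<longleftrightarrow> u \<in> S \<and> E v u"
| "adj_S E S (Inr u) (Inl v) \<longleftrightarrow> u \<in> S \<and> E v u"
| "adj_S E S _ _ \<longleftrightarrow> False"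

text \<open>Vertex set of the ball B_S(v,r) in G[S]; the ball is the induced subgraph on it,
  i.e. the graph (ball_vertices E S v r, adj_S E S), rooted at Inl v.\<close>
definition ball_vertices :: "('v \<Rightarrow> 'u \<Rightarrow> bool) \<Rightarrow> 'u set \<Rightarrow> 'v \<Rightarrow> nat \<Rightarrow> ('v + 'u) set" where
  "ball_vertices E S v r = {x. \<exists>n\<le>r. conn_within UNIV (adj_S E S) n (Inl v) x}"

end

theory Submission
  imports Defs
begin




lemma proj_matrix_prop:
  fixes H :: "(real^'u::finite) set" assumes sH: "subspace H"
  shows "proj_matrix H *v x \<in> H \<and> (\<forall>h\<in>H. inner (x - proj_matrix H *v x) h = 0)"
proof -
  let ?Q = "\<lambda>P::real^'u^'u. \<forall>x. P *v x \<in> H \<and> (\<forall>h\<in>H. inner (x - P *v x) h = 0)"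
  obtain Bs where Bs: "Bs \<subseteq> H" "pairwise orthogonal Bs" "\<And>x. x \<in> Bs \<Longrightarrow> norm x = 1"
      "independent Bs" "span Bs = H"
    using orthonormal_basis_subspace[OF sH] by metis
  have fin: "finite Bs" using Bs(4) independent_imp_finite by blast
  define P :: "real^'u^'u" where "P = (\<chi> i j. \<Sum>b\<in>Bs. b$i * b$j)"
  have Pv: "P *v x = (\<Sum>b\<in>Bs. inner b x *\<^sub>R b)" for x
    unfolding P_def
    apply (simp add: matrix_vector_mult_def vec_eq_iff inner_vec_def sum_distrib_left
        sum_distrib_right)
    apply (subst sum.swap) apply (simp add: algebra_simps)
    done
  have ex: "?Q P"
  proof
    fix x
    have "P *v x \<in> H" unfolding Pv using Bs(1) sH
      by (intro subspace_sum subspace_scale) auto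
    moreover have "inner (x - P *v x) b' = 0" if "b' \<in> Bs" for b'
    proof -
      have "inner (P *v x) b' = (\<Sum>b\<in>Bs. inner b x * inner b b')"
        unfolding Pv by (simp add: inner_sum_left)
      also have "\<dots> = (\<Sum>b\<in>{b'}. inner b x * inner b b')"
        using that fin Bs(2)
        by (intro sum.mono_neutral_right) (auto simp: pairwise_def orthogonal_def)
      also have "\<dots> = inner b' x" using Bs(3)[OF that] by (simp add: inner_commute dot_square_norm)
      finally show ?thesis by (simp add: inner_diff_left inner_diff_right inner_commute)
    qed
    then have "\<forall>h\<in>H. inner (x - P *v x) h = 0"
      using orthogonal_to_span[of _ Bs "x - P *v x"] Bs(5) unfolding orthogonal_def by blast
    ultimately show "P *v x \<in> H \<and> (\<forall>h\<in>H. inner (x - P *v x) h = 0)" by blast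
  qed
  have uni: "P1 = P2" if "?Q P1" "?Q P2" for P1 P2
  proof -
    have "P1 *v x = P2 *v x" for x
    proof -
      let ?z = "P1 *v x - P2 *v x"
      have "?z \<in> H" using that sH by (simp add: subspace_diff)
      then have "inner (x - P1 *v x) ?z = 0" "inner (x - P2 *v x) ?z = 0" using that by auto
      then have "inner ?z ?z = 0" by (simp add: inner_diff_left)
      then show ?thesis by simp
    qed
    then show ?thesis by (simp add: matrix_eq)
  qed
  have "?Q (proj_matrix H)" unfolding proj_matrix_def
    by (rule theI[of ?Q P]) (use ex uni in blast)+
  then show ?thesis by blast
qed



definition padm :: "real^'u^'u \<Rightarrow> 'u set \<Rightarrow> real^'u^'u" where
  "padm M S = (\<chi> i j. if i \<in> S \<and> j \<in> S then M$i$j else if i = j then 1 else 0)"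

lemma principal_det_pad:
  fixes M :: "real^'u::finite^'u"
  shows "principal_det M S = det (padm M S)"
proof -
  have sub: "{p. p permutes S} \<subseteq> {p. p permutes (UNIV::'u set)}"
    by (auto intro: permutes_subset)
  have z: "of_int (sign p) * (\<Prod>i\<in>UNIV. padm M S $ i $ p i) = 0"
    if "p \<in> {p. p permutes (UNIV::'u set)} - {p. p permutes S}" for p
  proof -
    from that have pu: "p permutes UNIV" and np: "\<not> p permutes S" by auto
    have "\<exists>i. i \<notin> S \<and> p i \<noteq> i"
    proof (rule ccontr)
      assume "\<not> ?thesis"
      then have "\<forall>x. x \<notin> S \<longrightarrow> p x = x" by blast
      with pu have "p permutes S" unfolding permutes_def by blast
      with np show False by blast
    qed
    then obtain i where i: "i \<notin> S" "p i \<noteq> i" by blast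
    have "padm M S $ i $ p i = 0" using i by (simp add: padm_def)
    then have "(\<Prod>i\<in>UNIV. padm M S $ i $ p i) = 0"
      by (intro prod_zero) auto
    then show ?thesis by simp
  qed
  have e: "of_int (sign p) * (\<Prod>i\<in>UNIV. padm M S $ i $ p i) = of_int (sign p) * (\<Prod>i\<in>S. M $ i $ p i)"
    if "p \<in> {p. p permutes S}" for p
  proof -
    from that have p: "p permutes S" by simp
    have "(\<Prod>i\<in>UNIV. padm M S $ i $ p i) = (\<Prod>i\<in>S. padm M S $ i $ p i)"
      using p by (intro prod.mono_neutral_right) (auto simp: padm_def permutes_not_in)
    also have "\<dots> = (\<Prod>i\<in>S. M $ i $ p i)"
      using p by (intro prod.cong) (auto simp: padm_def permutes_in_image)
    finally show ?thesis by simp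
  qed
  show ?thesis unfolding principal_det_def det_def
  proof -
    have "(\<Sum>p\<in>{p. p permutes UNIV}. of_int (sign p) * (\<Prod>i\<in>UNIV. padm M S $ i $ p i))
       = (\<Sum>p\<in>{p. p permutes S}. of_int (sign p) * (\<Prod>i\<in>UNIV. padm M S $ i $ p i))"
      by (rule sum.mono_neutral_right[OF _ sub]) (use z in auto)
    also have "\<dots> = (\<Sum>p\<in>{p. p permutes S}. of_int (sign p) * (\<Prod>i\<in>S. M $ i $ p i))"
      by (rule sum.cong[OF refl]) (rule e)
    finally show "(\<Sum>p\<in>{p. p permutes S}. of_int (sign p) * (\<Prod>i\<in>S. M $ i $ p i)) =
      (\<Sum>p\<in>{p. p permutes UNIV}. of_int (sign p) * (\<Prod>i\<in>UNIV. padm M S $ i $ p i))" by simp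
  qed
qed


lemma det_zero_if_ker:
  fixes A :: "real^'n::finite^'n"
  assumes "A *v x = 0" "x \<noteq> 0" shows "det A = 0"
  using assms invertible_det_nz invertible_left_inverse matrix_left_invertible_ker by metis

lemma cols_indep:
  fixes B :: "real^'u::finite^'v::finite"
  assumes pos: "det_measure B T > 0"
  shows "card T = rank B" "(\<Sum>u\<in>T. a u *\<^sub>R column u B) = 0 \<Longrightarrow> u0 \<in> T \<Longrightarrow> a u0 = 0"
proof -
  show ct: "card T = rank B" using pos unfolding det_measure_def by (auto split: if_splits)
  assume sz: "(\<Sum>u\<in>T. a u *\<^sub>R column u B) = 0" and u0: "u0 \<in> T"
  show "a u0 = 0"
  proof (rule ccontr)
    assume na: "a u0 \<noteq> 0"
    define x :: "real^'u" where "x = (\<chi> u. if u \<in> T then a u else 0)"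
    have "B *v x = (\<Sum>u\<in>UNIV. x$u *s column u B)" by (rule matrix_mult_sum)
    also have "\<dots> = (\<Sum>u\<in>T. a u *\<^sub>R column u B)"
      by (rule sum.mono_neutral_cong_right) (auto simp: x_def scalar_mult_eq_scaleR)
    finally have Bx: "B *v x = 0" using sz by simp
    have rowo: "inner x r = 0" if "r \<in> rows B" for r
    proof -
      from that obtain v where r: "r = row v B" by (auto simp: rows_def)
      have "inner x r = (B *v x)$v"
        by (simp add: r inner_vec_def row_def matrix_vector_mult_def mult.commute)
      then show ?thesis using Bx by simp
    qed
    let ?H = "row_space B"
    have sH: "subspace ?H" unfolding row_space_def by (rule subspace_span)
    have xH: "inner x h = 0" if "h \<in> ?H" for h
      using orthogonal_to_span[of h "rows B" x] that rowo unfolding row_space_def orthogonal_def by blast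
    let ?P = "proj_matrix ?H"
    have pp: "?P *v x \<in> ?H" "inner (x - ?P *v x) (?P *v x) = 0"
      using proj_matrix_prop[OF sH, of x] by auto
    have "inner (?P *v x) (?P *v x) = 0"
      using pp xH[OF pp(1)] by (simp add: inner_diff_left)
    then have P0: "?P *v x = 0" by simp
    have "padm ?P T *v x = 0"
    proof -
      have "(padm ?P T *v x)$i = 0" for i
      proof (cases "i \<in> T")
        case True
        have "(padm ?P T *v x)$i = (\<Sum>j\<in>UNIV. ?P$i$j * x$j)"
          using True by (auto simp: padm_def matrix_vector_mult_def x_def intro!: sum.cong)
        also have "\<dots> = (?P *v x)$i" by (simp add: matrix_vector_mult_def)
        finally show ?thesis using P0 by simp
      next
        case False
        have "(padm ?P T *v x)$i = (\<Sum>j\<in>UNIV. (if i = j then 1 else 0) * x$j)"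
          using False unfolding padm_def matrix_vector_mult_def by simp
        also have "\<dots> = (\<Sum>j\<in>UNIV. (if i = j then x$j else 0))"
          by (rule sum.cong) auto
        also have "\<dots> = x$i" by simp
        finally show ?thesis using False by (simp add: x_def)
      qed
      then show ?thesis by (simp add: vec_eq_iff)
    qed
    moreover have "x \<noteq> 0" using u0 na by (auto simp: x_def vec_eq_iff)
    ultimately have "det (padm ?P T) = 0" by (rule det_zero_if_ker)
    then have "principal_det ?P T = 0" by (simp add: principal_det_pad)
    then show False using pos unfolding det_measure_def by (auto split: if_splits)
  qed
qed




lemma fam_indep:
  fixes f :: "'a \<Rightarrow> real^'n::finite"
  assumes fin: "finite A" and ind: "\<And>a x. (\<Sum>x\<in>A. a x *\<^sub>R f x) = 0 \<Longrightarrow> x \<in> A \<Longrightarrow> a x = 0"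
  shows "inj_on f A" "independent (f ` A)"
proof -
  show inj: "inj_on f A"
  proof (rule inj_onI, rule ccontr)
    fix x1 x2 assume x: "x1 \<in> A" "x2 \<in> A" "f x1 = f x2" "x1 \<noteq> x2"
    define a where "a = (\<lambda>x. if x = x1 then 1 else if x = x2 then -1 else (0::real))"
    have "(\<Sum>x\<in>A. a x *\<^sub>R f x) = (\<Sum>x\<in>{x1,x2}. a x *\<^sub>R f x)"
      using x fin by (intro sum.mono_neutral_right) (auto simp: a_def)
    also have "\<dots> = 0" using x by (simp add: a_def)
    finally have "a x1 = 0" using ind x(1) by blast
    then show False by (simp add: a_def)
  qed
  show "independent (f ` A)"
  proof (rule independent_if_scalars_zero)
    show "finite (f ` A)" using fin by simp
    fix g y assume s: "(\<Sum>y\<in>f ` A. g y *\<^sub>R y) = 0" and y: "y \<in> f ` A"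
    then obtain x where x: "x \<in> A" "y = f x" by blast
    have "(\<Sum>x\<in>A. g (f x) *\<^sub>R f x) = 0" using s by (simp add: sum.reindex[OF inj])
    then have "g (f x) = 0" using ind[of "\<lambda>x. g (f x)"] x by blast
    then show "g y = 0" using x by simp
  qed
qed

lemma indep_fam:
  fixes X :: "(real^'n::finite) set"
  assumes "independent X" "inj_on h S" "h ` S \<subseteq> X" "finite S"
    and "(\<Sum>i\<in>S. c i *\<^sub>R h i) = 0" "i0 \<in> S"
  shows "c i0 = 0"
proof -
  let ?u = "\<lambda>y. c (inv_into S h y)"
  have "(\<Sum>y\<in>h ` S. ?u y *\<^sub>R y) = (\<Sum>i\<in>S. c i *\<^sub>R h i)"
    using assms(2) by (simp add: sum.reindex)
  then have "(\<Sum>y\<in>h ` S. ?u y *\<^sub>R y) = 0" using assms(5) by simp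
  then have "?u (h i0) = 0" using independentD[OF assms(1), of "h ` S" ?u "h i0"] assms by auto
  then show ?thesis using assms(2,6) by simp
qed

lemma cols_span:
  fixes B :: "real^'u::finite^'v::finite"
  assumes ct: "card T = rank B"
    and ind: "\<And>a u0. (\<Sum>u\<in>T. a u *\<^sub>R column u B) = 0 \<Longrightarrow> u0 \<in> T \<Longrightarrow> a u0 = 0"
    and y: "\<And>u. u \<in> T \<Longrightarrow> inner y (column u B) = 0"
  shows "inner y (column w B) = 0"
proof -
  have fi: "inj_on (\<lambda>u. column u B) T" "independent ((\<lambda>u. column u B) ` T)"
    using fam_indep[of T "\<lambda>u. column u B"] ind by auto
  have sub: "(\<lambda>u. column u B) ` T \<subseteq> columns B" by (auto simp: columns_def)
  have "dim (columns B) = card T" using ct column_rank_def by metis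
  also have "\<dots> = dim ((\<lambda>u. column u B) ` T)"
    using fi by (simp add: dim_eq_card_independent card_image)
  finally have "span ((\<lambda>u. column u B) ` T) = span (columns B)"
    using dim_eq_span[OF sub] by simp
  then have "column w B \<in> span ((\<lambda>u. column u B) ` T)"
    by (metis (mono_tags, lifting) columns_def mem_Collect_eq span_base UNIV_I)
  then show ?thesis using orthogonal_to_span[of "column w B" _ y] y
    unfolding orthogonal_def by blast
qed

lemma transversal:
  fixes X :: "(real^'u::finite) set"
  assumes ind: "independent X" and supp: "\<And>x u. x \<in> X \<Longrightarrow> u \<notin> S \<Longrightarrow> x$u = 0"
    and cX: "card X = card S"
  shows "\<exists>\<tau>. bij_betw \<tau> X S \<and> (\<forall>x\<in>X. x$(\<tau> x) \<noteq> 0)"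
proof -
  have fX: "finite X" using ind independent_imp_finite by blast
  have fS: "finite S" by simp
  obtain h where h: "bij_betw h S X" using finite_same_card_bij[OF fS fX] cX by auto
  define A :: "real^'u^'u" where "A = (\<chi> i. if i \<in> S then h i else axis i 1)"
  have ker: "y = 0" if y: "transpose A *v y = 0" for y
  proof -
    have c: "(\<Sum>i\<in>UNIV. A$i$j * y$i) = 0" for j
      using y by (simp add: vec_eq_iff matrix_vector_mult_def transpose_def mult.commute)
    have hX: "i \<in> S \<Longrightarrow> h i \<in> X" for i using h by (auto simp: bij_betw_def)
    have yo: "y$j = 0" if "j \<notin> S" for j
    proof -
      have "(\<Sum>i\<in>UNIV. A$i$j * y$i) = (\<Sum>i\<in>UNIV. if i = j then y$i else 0)"
        using that supp hX by (intro sum.cong) (auto simp: A_def axis_def)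
      then show ?thesis using c[of j] by simp
    qed
    have "(\<Sum>i\<in>S. y$i *\<^sub>R h i) = 0"
    proof -
      have "(\<Sum>i\<in>S. y$i *\<^sub>R h i)$j = 0" for j
      proof -
        have "(\<Sum>i\<in>S. y$i *\<^sub>R h i)$j = (\<Sum>i\<in>S. A$i$j * y$i)"
          by (auto simp: A_def intro!: sum.cong)
        also have "\<dots> = (\<Sum>i\<in>UNIV. A$i$j * y$i)"
          using yo by (intro sum.mono_neutral_left) auto
        finally show ?thesis using c by simp
      qed
      then show ?thesis by (simp add: vec_eq_iff)
    qed
    then have "y$i = 0" if "i \<in> S" for i
      using indep_fam[OF ind, of h S "\<lambda>i. y$i" i] h that by (auto simp: bij_betw_def)
    with yo show "y = 0" by (auto simp: vec_eq_iff)
  qed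
  have "invertible (transpose A)"
    unfolding invertible_left_inverse matrix_left_invertible_ker using ker by blast
  then have "det (transpose A) \<noteq> 0" by (simp add: invertible_det_nz)
  then have "det A \<noteq> 0" by simp
  then obtain p where p0: "p \<in> {p. p permutes (UNIV::'u set)}"
      "of_int (sign p) * (\<Prod>i\<in>UNIV. A$i$p i) \<noteq> 0"
    unfolding det_def using sum.not_neutral_contains_not_neutral by blast
  then have p: "p permutes (UNIV::'u set)" "(\<Prod>i\<in>UNIV. A$i$p i) \<noteq> 0" by auto
  have nz: "A$i$p i \<noteq> 0" for i using p(2) by auto
  have injp: "inj p" using permutes_inj[OF p(1)] .
  have fix_out: "p i = i" if "i \<notin> S" for i
  proof -
    have "A$i$p i = (axis i (1::real))$(p i)" using that by (simp add: A_def)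
    also have "\<dots> = (if p i = i then 1 else 0)" by (simp add: axis_def)
    finally show ?thesis using nz[of i] by (simp split: if_splits)
  qed
  have inS: "p i \<in> S" if "i \<in> S" for i
  proof (rule ccontr)
    assume "p i \<notin> S"
    then have "p (p i) = p i" by (rule fix_out)
    then have "p i = i" by (rule injD[OF injp])
    with that \<open>p i \<notin> S\<close> show False by simp
  qed
  have injS: "inj_on p S" using inj_on_subset[OF injp subset_UNIV] .
  have "p ` S \<subseteq> S" using inS by blast
  then have "p ` S = S" using endo_inj_surj[of S p] injS by simp
  then have pS: "bij_betw p S S" using injS by (simp add: bij_betw_def)
  define \<tau> where "\<tau> = p \<circ> inv_into S h"
  have "bij_betw \<tau> X S" unfolding \<tau>_def
    using bij_betw_trans[OF bij_betw_inv_into[OF h] pS] .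
  moreover have "x$(\<tau> x) \<noteq> 0" if x: "x \<in> X" for x
  proof -
    let ?i = "inv_into S h x"
    have xh: "x \<in> h ` S" using h x by (simp add: bij_betw_def)
    have i: "?i \<in> S" "h ?i = x" using inv_into_into[OF xh] f_inv_into_f[OF xh] by auto
    have "A$?i$p ?i = x$(p ?i)" using i by (simp add: A_def)
    then show ?thesis using nz[of ?i] by (simp add: \<tau>_def)
  qed
  ultimately show ?thesis by blast
qed



lemma private_col:
  fixes E :: "'v::finite \<Rightarrow> 'u::finite \<Rightarrow> bool" and B :: "real^'u^'v"
  assumes C4: "C4_free E" and breg: "biregular d b E" and sg: "signed_adjacency E B"
    and cJ: "card J < d" and z: "\<And>w. (\<Sum>v\<in>J. a v * B$v$w) = 0" and v0: "v0 \<in> J"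
  shows "a v0 = 0"
proof -
  let ?N = "\<lambda>v. {u. E v u}"
  let ?S = "\<Union>v\<in>J-{v0}. ?N v0 \<inter> ?N v"
  have "card ?S \<le> (\<Sum>v\<in>J-{v0}. card (?N v0 \<inter> ?N v))" by (rule card_UN_le) simp
  also have "\<dots> \<le> (\<Sum>v\<in>J-{v0}. 1)"
  proof (rule sum_mono)
    fix v assume "v \<in> J - {v0}"
    then have "v0 \<noteq> v" by auto
    then have "card {u. E v0 u \<and> E v u} \<le> 1" using C4 unfolding C4_free_def by blast
    moreover have "?N v0 \<inter> ?N v = {u. E v0 u \<and> E v u}" by auto
    ultimately show "card (?N v0 \<inter> ?N v) \<le> 1" by simp
  qed
  also have "\<dots> = card J - 1" using v0 by simp
  also have "\<dots> < card (?N v0)" using breg cJ unfolding biregular_def by auto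
  finally have "card ?S < card (?N v0)" .
  then have "\<not> ?N v0 \<subseteq> ?S" by (metis (no_types, lifting) card_mono finite_UN_I finite leD finite_Int)
  then obtain w where w: "E v0 w" "w \<notin> ?S" by blast
  have "(\<Sum>v\<in>J. a v * B$v$w) = (\<Sum>v\<in>{v0}. a v * B$v$w)"
  proof (rule sum.mono_neutral_right)
    show "\<forall>v\<in>J - {v0}. a v * B $ v $ w = 0"
    proof
      fix v assume v: "v \<in> J - {v0}"
      then have "\<not> E v w" using w by blast
      then show "a v * B $ v $ w = 0" using sg unfolding signed_adjacency_def by simp
    qed
  qed (use v0 in auto)
  then have "a v0 * B$v0$w = 0" using z by simp
  moreover have "B$v0$w \<noteq> 0" using sg w(1) unfolding signed_adjacency_def by force
  ultimately show ?thesis by simp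
qed



lemma walk_single[simp]: "walk_in W A [x] \<longleftrightarrow> x \<in> W"
  by (simp add: walk_in_def)

lemma walk_Cons:
  assumes ne: "xs \<noteq> []"
  shows "walk_in W A (x # xs) \<longleftrightarrow> x \<in> W \<and> A x (hd xs) \<and> walk_in W A xs"
proof
  assume h: "walk_in W A (x # xs)"
  from h have s: "set (x#xs) \<subseteq> W"
    and st: "\<And>i. Suc i < length (x#xs) \<Longrightarrow> A ((x#xs)!i) ((x#xs)!Suc i)"
    unfolding walk_in_def by auto
  have "A x (hd xs)" using st[of 0] ne by (simp add: hd_conv_nth)
  moreover have "A (xs!i) (xs!Suc i)" if "Suc i < length xs" for i
    using st[of "Suc i"] that by simp
  ultimately show "x \<in> W \<and> A x (hd xs) \<and> walk_in W A xs"
    using s ne by (simp add: walk_in_def)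
next
  assume h: "x \<in> W \<and> A x (hd xs) \<and> walk_in W A xs"
  have "A ((x#xs)!i) ((x#xs)!Suc i)" if "Suc i < length (x#xs)" for i
  proof (cases i)
    case 0 then show ?thesis using h ne by (simp add: hd_conv_nth)
  next
    case (Suc j) then show ?thesis using h that by (simp add: walk_in_def)
  qed
  then show "walk_in W A (x # xs)" using h by (simp add: walk_in_def)
qed

lemma walk_snoc:
  assumes ne: "xs \<noteq> []"
  shows "walk_in W A (xs @ [y]) \<longleftrightarrow> walk_in W A xs \<and> y \<in> W \<and> A (last xs) y"
proof
  assume h: "walk_in W A (xs @ [y])"
  from h have s: "set (xs @ [y]) \<subseteq> W"
    and st: "\<And>i. Suc i < length (xs @ [y]) \<Longrightarrow> A ((xs @ [y])!i) ((xs @ [y])!Suc i)"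
    unfolding walk_in_def by auto
  have "A ((xs @ [y])!(length xs - 1)) ((xs @ [y])!Suc (length xs - 1))"
    using st[of "length xs - 1"] ne by simp
  moreover have "(xs @ [y])!(length xs - 1) = last xs" using ne by (simp add: nth_append last_conv_nth)
  moreover have "Suc (length xs - 1) = length xs" using ne by simp
  ultimately have "A (last xs) y" by simp
  moreover have "A (xs!i) (xs!Suc i)" if "Suc i < length xs" for i
    using st[of i] that by (simp add: nth_append)
  ultimately show "walk_in W A xs \<and> y \<in> W \<and> A (last xs) y"
    using s ne by (simp add: walk_in_def)
next
  assume h: "walk_in W A xs \<and> y \<in> W \<and> A (last xs) y"
  have "A ((xs @ [y])!i) ((xs @ [y])!Suc i)" if i: "Suc i < length (xs @ [y])" for i
  proof (cases "Suc i < length xs")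
    case True then show ?thesis using h by (simp add: nth_append walk_in_def)
  next
    case False
    then have "i = length xs - 1" using i by simp
    then show ?thesis using h ne False by (simp add: nth_append last_conv_nth)
  qed
  then show "walk_in W A (xs @ [y])" using h by (simp add: walk_in_def)
qed

lemma conn_zero: "conn_within W A 0 a x \<longleftrightarrow> a \<in> W \<and> x = a"
  unfolding conn_within_def
proof
  assume "\<exists>xs. walk_in W A xs \<and> hd xs = a \<and> last xs = x \<and> length xs = Suc 0"
  then obtain xs where "walk_in W A xs" "hd xs = a" "last xs = x" "length xs = Suc 0" by blast
  then show "a \<in> W \<and> x = a" by (cases xs) auto
next
  assume "a \<in> W \<and> x = a"
  then show "\<exists>xs. walk_in W A xs \<and> hd xs = a \<and> last xs = x \<and> length xs = Suc 0"
    by (intro exI[of _ "[a]"]) auto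
qed

lemma conn_snoc: "conn_within W A n a x \<Longrightarrow> y \<in> W \<Longrightarrow> A x y \<Longrightarrow> conn_within W A (Suc n) a y"
  unfolding conn_within_def
proof (elim exE conjE)
  fix xs assume h: "walk_in W A xs" "hd xs = a" "last xs = x" "length xs = Suc n" "y \<in> W" "A x y"
  then have ne: "xs \<noteq> []" by auto
  show "\<exists>xs. walk_in W A xs \<and> hd xs = a \<and> last xs = y \<and> length xs = Suc (Suc n)"
    by (rule exI[of _ "xs @ [y]"]) (use h ne in \<open>auto simp: walk_snoc\<close>)
qed

lemma conn_last_step: "conn_within W A (Suc n) a x \<Longrightarrow> \<exists>z. conn_within W A n a z \<and> A z x \<and> x \<in> W"
  unfolding conn_within_def
proof (elim exE conjE)
  fix xs assume h: "walk_in W A xs" "hd xs = a" "last xs = x" "length xs = Suc (Suc n)"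
  define ys where "ys = butlast xs"
  have ne: "ys \<noteq> []" using h(4) unfolding ys_def by (metis length_butlast diff_Suc_1 list.size(3) nat.distinct(1))
  have xs: "xs = ys @ [x]" using h(3,4) unfolding ys_def by (metis append_butlast_last_id list.size(3) nat.simps(3))
  have w: "walk_in W A ys" "x \<in> W" "A (last ys) x" using h(1) ne xs walk_snoc by metis+
  show "\<exists>z. (\<exists>xs. walk_in W A xs \<and> hd xs = a \<and> last xs = z \<and> length xs = Suc n) \<and> A z x \<and> x \<in> W"
    by (rule exI[of _ "last ys"]) (use w h xs ne in auto)
qed

lemma conn_mono: "W \<subseteq> W' \<Longrightarrow> conn_within W A n a x \<Longrightarrow> conn_within W' A n a x"
  unfolding conn_within_def walk_in_def by blast

lemma conn_in: "conn_within W A n a x \<Longrightarrow> x \<in> W"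
  by (cases n) (auto simp: conn_zero dest: conn_last_step)

lemma gdist_conn:
  assumes "conn_within W A n a x"
  shows "conn_within W A (gdist W A a x) a x" "gdist W A a x \<le> n"
  using assms unfolding gdist_def by (auto intro: LeastI Least_le)

lemma gdist_zero: "conn_within W A n a x \<Longrightarrow> gdist W A a x = 0 \<Longrightarrow> x = a"
proof -
  assume c: "conn_within W A n a x" and g: "gdist W A a x = 0"
  have "conn_within W A 0 a x" using gdist_conn(1)[OF c] g by metis
  then show "x = a" unfolding conn_zero by blast
qed

lemma gdist_tri:
  assumes "conn_within W A n a x" "y \<in> W" "A x y"
  shows "gdist W A a y \<le> Suc (gdist W A a x)"
proof -
  have "conn_within W A (gdist W A a x) a x" by (rule gdist_conn(1)[OF assms(1)])
  then have "conn_within W A (Suc (gdist W A a x)) a y" using conn_snoc[of W A _ a x y] assms(2,3) by blast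
  then show ?thesis by (rule gdist_conn(2))
qed

lemma parent_ex:
  assumes "conn_within W A n a x" "gdist W A a x = Suc m"
  shows "\<exists>z. conn_within W A m a z \<and> A z x \<and> gdist W A a z = m"
proof -
  have "conn_within W A (gdist W A a x) a x" by (rule gdist_conn(1)[OF assms(1)])
  then have "conn_within W A (Suc m) a x" unfolding assms(2) .
  from conn_last_step[OF this] obtain z where z: "conn_within W A m a z" "A z x" "x \<in> W" by blast
  have "gdist W A a z \<le> m" by (rule gdist_conn(2)[OF z(1)])
  moreover have "gdist W A a x \<le> Suc (gdist W A a z)" by (rule gdist_tri[OF z(1) z(3) z(2)])
  ultimately have "gdist W A a z = m" using assms(2) by linarith
  then show ?thesis using z by blast
qed

lemma up_path:
  assumes sym: "\<And>x y. A x y = A y x"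
  shows "conn_within W A n1 a y1 \<Longrightarrow> conn_within W A n2 a y2 \<Longrightarrow> y1 \<noteq> y2 \<Longrightarrow>
    gdist W A a y1 = m \<Longrightarrow> gdist W A a y2 = m \<Longrightarrow>
    \<exists>c. walk_in W A c \<and> hd c = y1 \<and> last c = y2 \<and> distinct c \<and> length c \<ge> 2 \<and>
        (\<forall>z\<in>set c. gdist W A a z \<le> m)"
proof (induction m arbitrary: y1 y2 n1 n2)
  case 0
  then have "y1 = a" "y2 = a" using gdist_zero by metis+
  with 0 show ?case by simp
next
  case (Suc m)
  obtain z1 where z1: "conn_within W A m a z1" "A z1 y1" "gdist W A a z1 = m"
    using parent_ex[OF Suc.prems(1,4)] by blast
  obtain z2 where z2: "conn_within W A m a z2" "A z2 y2" "gdist W A a z2 = m"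
    using parent_ex[OF Suc.prems(2,5)] by blast
  have inW: "y1 \<in> W" "y2 \<in> W" "z1 \<in> W" "z2 \<in> W"
    using conn_in Suc.prems(1,2) z1(1) z2(1) by metis+
  show ?case
  proof (cases "z1 = z2")
    case True
    show ?thesis
      by (rule exI[of _ "[y1, z1, y2]"])
        (use True z1 z2 inW Suc.prems in \<open>auto simp: walk_Cons sym[of y1]\<close>)
  next
    case False
    obtain c where c: "walk_in W A c" "hd c = z1" "last c = z2" "distinct c" "length c \<ge> 2"
      "\<forall>z\<in>set c. gdist W A a z \<le> m"
      using Suc.IH[OF z1(1) z2(1) False z1(3) z2(3)] by blast
    have cne: "c \<noteq> []" using c(5) by auto
    have "walk_in W A (c @ [y2])" using c cne z2 inW by (simp add: walk_snoc)
    then have w: "walk_in W A (y1 # c @ [y2])"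
      using cne c(2) z1(2) inW by (simp add: walk_Cons sym[of y1] hd_append)
    have "y1 \<notin> set c" "y2 \<notin> set c" using c(6) Suc.prems(4,5) by auto
    then show ?thesis
      by (intro exI[of _ "y1 # c @ [y2]"]) (use w c Suc.prems(3,4,5) in auto)
  qed
qed

lemma two_parents_cycle:
  assumes sym: "\<And>x y. A x y = A y x"
    and c1: "conn_within W A n1 a y1" and c2: "conn_within W A n2 a y2" and ne: "y1 \<noteq> y2"
    and d1: "gdist W A a y1 = m" and d2: "gdist W A a y2 = m"
    and cx: "conn_within W A n a x" and dx: "gdist W A a x = Suc m"
    and a1: "A x y1" and a2: "A x y2"
  shows "has_cycle W A"
proof -
  obtain c where c: "walk_in W A c" "hd c = y1" "last c = y2" "distinct c" "length c \<ge> 2"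
      "\<forall>z\<in>set c. gdist W A a z \<le> m"
    using up_path[OF sym c1 c2 ne d1 d2] by blast
  have cne: "c \<noteq> []" using c(5) by auto
  have xW: "x \<in> W" using conn_in cx by metis
  have "x \<notin> set c" using c(6) dx by auto
  moreover have "walk_in W A (x # c)" using c cne xW a1 by (simp add: walk_Cons)
  moreover have "A (last (x # c)) (hd (x # c))" using c cne a2 sym by simp
  ultimately show ?thesis unfolding has_cycle_def
    by (intro exI[of _ "x # c"]) (use c in auto)
qed



lemma adj_sym: "adj_S E T x y = adj_S E T y x"
  by (cases x; cases y) auto

lemma adj_Inr: "adj_S E T z (Inr u) \<Longrightarrow> \<exists>v. z = Inl v \<and> u \<in> T \<and> E v u"
  by (cases z) auto

lemma adj_Inl: "adj_S E T (Inl v) y \<Longrightarrow> \<exists>u. y = Inr u \<and> u \<in> T \<and> E v u"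
  by (cases y) auto

lemma parity:
  "conn_within W (adj_S E T) n (Inl o0) x \<Longrightarrow> (isl x \<longleftrightarrow> even n)"
proof (induction n arbitrary: x)
  case 0
  then show ?case by (simp add: conn_zero)
next
  case (Suc n)
  from conn_last_step[OF Suc.prems] obtain z where z: "conn_within W (adj_S E T) n (Inl o0) z"
    "adj_S E T z x" by blast
  have "isl z \<longleftrightarrow> even n" using Suc.IH[OF z(1)] .
  moreover have "isl z \<longleftrightarrow> \<not> isl x" using z(2) by (cases z; cases x) auto
  ultimately show ?case by auto
qed

lemma ball_conn:
  "conn_within UNIV (adj_S E T) n (Inl o0) x \<Longrightarrow> n \<le> r \<Longrightarrow>
   conn_within (ball_vertices E T o0 r) (adj_S E T) n (Inl o0) x"
proof (induction n arbitrary: x)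
  case 0
  then have "x = Inl o0" by (simp add: conn_zero)
  moreover have "Inl o0 \<in> ball_vertices E T o0 r"
    unfolding ball_vertices_def using conn_zero[of UNIV "adj_S E T" "Inl o0" "Inl o0"] by auto
  ultimately show ?case by (simp add: conn_zero)
next
  case (Suc n)
  from conn_last_step[OF Suc.prems(1)] obtain z where
    z: "conn_within UNIV (adj_S E T) n (Inl o0) z" "adj_S E T z x" by blast
  have zc: "conn_within (ball_vertices E T o0 r) (adj_S E T) n (Inl o0) z"
    using Suc.IH[OF z(1)] Suc.prems(2) by simp
  have "x \<in> ball_vertices E T o0 r" unfolding ball_vertices_def using Suc.prems by blast
  then show ?case using conn_snoc[of "ball_vertices E T o0 r" "adj_S E T" n "Inl o0" z x] zc z(2)
    by blast
qed

lemma ball_reach: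
  assumes "x \<in> ball_vertices E T o0 r"
  shows "conn_within (ball_vertices E T o0 r) (adj_S E T)
           (gdist (ball_vertices E T o0 r) (adj_S E T) (Inl o0) x) (Inl o0) x"
    "gdist (ball_vertices E T o0 r) (adj_S E T) (Inl o0) x \<le> r"
proof -
  obtain n where n: "n \<le> r" "conn_within UNIV (adj_S E T) n (Inl o0) x"
    using assms unfolding ball_vertices_def by blast
  have c: "conn_within (ball_vertices E T o0 r) (adj_S E T) n (Inl o0) x"
    using ball_conn[OF n(2) n(1)] .
  show "conn_within (ball_vertices E T o0 r) (adj_S E T)
           (gdist (ball_vertices E T o0 r) (adj_S E T) (Inl o0) x) (Inl o0) x"
    using gdist_conn(1)[OF c] .
  show "gdist (ball_vertices E T o0 r) (adj_S E T) (Inl o0) x \<le> r"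
    using gdist_conn(2)[OF c] n(1) by simp
qed

lemma ball_ext:
  assumes "x \<in> ball_vertices E T o0 r" "adj_S E T x y"
    "gdist (ball_vertices E T o0 r) (adj_S E T) (Inl o0) x < r"
  shows "y \<in> ball_vertices E T o0 r"
proof -
  let ?g = "gdist (ball_vertices E T o0 r) (adj_S E T) (Inl o0) x"
  have "conn_within UNIV (adj_S E T) ?g (Inl o0) x"
    using conn_mono[OF subset_UNIV ball_reach(1)[OF assms(1)]] .
  then have "conn_within UNIV (adj_S E T) (Suc ?g) (Inl o0) y"
    using conn_snoc[of UNIV "adj_S E T" ?g "Inl o0" x y] assms(2) by blast
  moreover have "Suc ?g \<le> r" using assms(3) by simp
  ultimately show ?thesis unfolding ball_vertices_def by blast
qed

lemma two_elems: "2 \<le> card S \<Longrightarrow> \<exists>a b. a \<in> S \<and> b \<in> S \<and> a \<noteq> b"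
proof -
  assume c: "2 \<le> card S"
  then have "S \<noteq> {}" by auto
  then obtain a where a: "a \<in> S" by blast
  have "card (S - {a}) \<ge> 1" using c a by (simp add: card_Diff_singleton_if)
  then have "S - {a} \<noteq> {}" by (metis card.empty not_one_le_zero)
  then obtain b where "b \<in> S - {a}" by blast
  then show ?thesis using a by blast
qed





theorem lemma2p9:
  fixes k d r :: nat
    and E :: "'v::finite \<Rightarrow> 'u::finite \<Rightarrow> bool"
    and B :: "real^'u^'v"
    and T :: "'u set"
    and o0 :: 'v
  assumes "k \<ge> 1" and "d > 0"
    and "C4_free E" and "biregular d (k + 1) E"
    and "signed_adjacency E B"
    and "even r"
    and "det_measure B T > 0"
    and "valid_tree k (ball_vertices E T o0 r) (adj_S E T) (Inl o0)"
    and "card (even_vertices (ball_vertices E T o0 r) (adj_S E T) (Inl o0)) < d"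
  shows "tree_height (ball_vertices E T o0 r) (adj_S E T) (Inl o0) = r
    \<and> m_count (I_set (ball_vertices E T o0 r) (adj_S E T) (Inl o0))
              (ball_vertices E T o0 r) (adj_S E T) (Inl o0) > 0"
proof -
  note k1 = assms(1) and C4 = assms(3) and breg = assms(4) and sg = assms(5)
  define W where "W = ball_vertices E T o0 r"
  define A where "A = adj_S E T"
  define rt where "rt = (Inl o0 :: 'v + 'u)"
  define \<delta> where "\<delta> = gdist W A rt"
  have vt: "valid_tree k W A rt" using assms(8) by (simp add: W_def A_def rt_def)
  have nocyc: "\<not> has_cycle W A" using vt by (simp add: valid_tree_def is_tree_def)
  have symA: "\<And>x y. A x y = A y x" unfolding A_def by (rule adj_sym)
  have reach: "conn_within W A (\<delta> x) rt x" "\<delta> x \<le> r" if "x \<in> W" for x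
    using ball_reach[of x E T o0 r] that unfolding W_def A_def rt_def \<delta>_def by auto
  have par: "isl x \<longleftrightarrow> even (\<delta> x)" if "x \<in> W" for x
    using parity[OF reach(1)[OF that, unfolded A_def rt_def]] .
  have ext: "y \<in> W" if "x \<in> W" "A x y" "\<delta> x < r" for x y
    using ball_ext[of x E T o0 r y] that unfolding W_def A_def \<delta>_def rt_def by auto
  have rtW: "rt \<in> W"
    unfolding W_def rt_def ball_vertices_def using conn_zero[of UNIV "adj_S E T" "Inl o0" "Inl o0"] by auto
  have \<delta>rt: "\<delta> rt = 0"
    using gdist_conn(2)[of W A 0 rt rt] rtW unfolding \<delta>_def by (simp add: conn_zero)
  have tri: "\<delta> y \<le> Suc (\<delta> x)" if "x \<in> W" "y \<in> W" "A x y" for x y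
    using gdist_tri[OF reach(1)[OF that(1)] that(2,3)] unfolding \<delta>_def .
  define VT where "VT = {v. Inl v \<in> W}"
  define UT where "UT = {u. Inr u \<in> W}"
  have ev: "even_vertices W A rt = Inl ` VT"
  proof -
    have "x \<in> even_vertices W A rt \<longleftrightarrow> x \<in> Inl ` VT" for x
      using par[of x] unfolding even_vertices_def \<delta>_def VT_def by (cases x) auto
    then show ?thesis by blast
  qed
  have od: "odd_vertices W A rt = Inr ` UT"
  proof -
    have "x \<in> odd_vertices W A rt \<longleftrightarrow> x \<in> Inr ` UT" for x
      using par[of x] unfolding odd_vertices_def \<delta>_def UT_def by (cases x) auto
    then show ?thesis by blast
  qed
  have cVT: "card VT < d"
  proof -
    have "card (Inl ` VT :: ('v + 'u) set) = card VT" by (rule card_image) (simp add: inj_on_def)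
    moreover have "card (Inl ` VT :: ('v + 'u) set) < d" using assms(9) ev by (simp add: W_def A_def rt_def)
    ultimately show ?thesis by linarith
  qed
  have UTT: "u \<in> T" if "u \<in> UT" for u
  proof -
    have uW: "Inr u \<in> W" using that by (simp add: UT_def)
    have "odd (\<delta> (Inr u))" using par[OF uW] by simp
    then obtain m where m: "\<delta> (Inr u) = Suc m" by (cases "\<delta> (Inr u)") auto
    obtain z where "A z (Inr u)"
      using parent_ex[OF reach(1)[OF uW]] m unfolding \<delta>_def by blast
    then show ?thesis using adj_Inr[of E T z u] unfolding A_def by blast
  qed
  have nbrs: "{y\<in>W. A (Inr u) y} = Inl ` {v. E v u}" if "u \<in> UT" for u
  proof -
    have "Inr u \<in> odd_vertices W A rt" using od that by blast
    then have "degree_in W A (Inr u) = k + 1" using vt by (simp add: valid_tree_def)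
    then have c1: "card {y\<in>W. A (Inr u) y} = k + 1" by (simp add: degree_in_def)
    have c2: "card (Inl ` {v. E v u} :: ('v + 'u) set) = k + 1"
      using breg card_image[of Inl "{v. E v u}"] by (simp add: biregular_def inj_on_def)
    have sub: "{y\<in>W. A (Inr u) y} \<subseteq> Inl ` {v. E v u}"
    proof
      fix y assume "y \<in> {y\<in>W. A (Inr u) y}"
      then have "A y (Inr u)" using symA by auto
      then show "y \<in> Inl ` {v. E v u}" using adj_Inr[of E T y u] unfolding A_def by auto
    qed
    show ?thesis using card_subset_eq[OF _ sub] c1 c2 by simp
  qed
  have colsupp: "v \<in> VT" if "u \<in> UT" "E v u" for u v
  proof -
    have "Inl v \<in> Inl ` {v. E v u}" using that by blast
    then show ?thesis using nbrs[OF that(1)] by (auto simp: VT_def)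
  qed
  have adjUV: "A (Inr u) (Inl v)" if "u \<in> UT" "E v u" for u v
    using UTT[OF that(1)] that(2) by (simp add: A_def)

  have child: "\<exists>v. E v u \<and> \<delta> (Inl v) = Suc (\<delta> (Inr u))" if uU: "u \<in> UT" for u
  proof (rule ccontr)
    assume nc: "\<not> ?thesis"
    have uW: "Inr u \<in> W" using uU by (simp add: UT_def)
    have down: "Suc (\<delta> (Inl v)) = \<delta> (Inr u)" if "E v u" for v
    proof -
      have vW: "Inl v \<in> W" using colsupp[OF uU that] by (simp add: VT_def)
      have a: "A (Inr u) (Inl v)" by (rule adjUV[OF uU that])
      have "\<delta> (Inl v) \<le> Suc (\<delta> (Inr u))" by (rule tri[OF uW vW a])
      moreover have "\<delta> (Inr u) \<le> Suc (\<delta> (Inl v))" using tri[OF vW uW] a symA by blast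
      moreover have "even (\<delta> (Inl v))" "odd (\<delta> (Inr u))" using par[OF vW] par[OF uW] by auto
      moreover have "\<delta> (Inl v) \<noteq> Suc (\<delta> (Inr u))" using nc that by blast
      ultimately show ?thesis by presburger
    qed
    have "2 \<le> card {v. E v u}" using breg k1 by (simp add: biregular_def)
    then obtain v1 v2 where v: "E v1 u" "E v2 u" "v1 \<noteq> v2" using two_elems by blast
    have vW: "Inl v1 \<in> W" "Inl v2 \<in> W" using colsupp[OF uU] v by (auto simp: VT_def)
    have "has_cycle W A"
      by (rule two_parents_cycle[OF symA reach(1)[OF vW(1)] reach(1)[OF vW(2)] _ refl _
            reach(1)[OF uW]])
        (use v down[OF v(1)] down[OF v(2)] adjUV[OF uU v(1)] adjUV[OF uU v(2)] in \<open>auto simp: \<delta>_def\<close>)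
    with nocyc show False by blast
  qed
  obtain ch where ch: "\<And>u. u \<in> UT \<Longrightarrow> E (ch u) u \<and> \<delta> (Inl (ch u)) = Suc (\<delta> (Inr u))"
    using child by metis
  have chinj: "inj_on ch UT"
  proof (rule inj_onI, rule ccontr)
    fix u1 u2 assume u: "u1 \<in> UT" "u2 \<in> UT" "ch u1 = ch u2" "u1 \<noteq> u2"
    let ?v = "ch u1"
    have uW: "Inr u1 \<in> W" "Inr u2 \<in> W" using u by (auto simp: UT_def)
    have vW: "Inl ?v \<in> W" using colsupp[OF u(1)] ch[OF u(1)] by (auto simp: VT_def)
    have a: "A (Inl ?v) (Inr u1)" "A (Inl ?v) (Inr u2)"
      using adjUV[OF u(1)] adjUV[OF u(2)] ch[OF u(1)] ch[OF u(2)] u(3) symA by auto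
    have d: "\<delta> (Inr u1) = \<delta> (Inr u2)" using ch[OF u(1)] ch[OF u(2)] u(3) by simp
    have "has_cycle W A"
      by (rule two_parents_cycle[OF symA reach(1)[OF uW(1)] reach(1)[OF uW(2)] _ refl _
            reach(1)[OF vW]])
        (use u a d ch[OF u(1)] in \<open>auto simp: \<delta>_def\<close>)
    with nocyc show False by blast
  qed
  have o0VT: "o0 \<in> VT" using rtW by (simp add: VT_def rt_def)
  have "ch ` UT \<subseteq> VT - {o0}"
  proof
    fix v assume "v \<in> ch ` UT"
    then obtain u where u: "u \<in> UT" "v = ch u" by blast
    have "v \<in> VT" using colsupp[OF u(1)] ch[OF u(1)] u(2) by auto
    moreover have "v \<noteq> o0" using ch[OF u(1)] u(2) \<delta>rt by (auto simp: rt_def)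
    ultimately show "v \<in> VT - {o0}" by blast
  qed
  then have "card UT \<le> card (VT - {o0})"
    using card_image[OF chinj] card_mono[of "VT - {o0}" "ch ` UT"] by simp
  then have UTlt: "card UT < card VT" using o0VT card_Diff_singleton[OF o0VT]
    by (metis card_gt_0_iff diff_less empty_iff finite le_less_trans zero_less_one)

  have ct: "card T = rank B" using cols_indep(1)[OF assms(7)] .
  have cind: "\<And>a u0. (\<Sum>u\<in>T. a u *\<^sub>R column u B) = 0 \<Longrightarrow> u0 \<in> T \<Longrightarrow> a u0 = 0"
    using cols_indep(2)[OF assms(7)] by blast
  define I' where "I' = {v\<in>VT. \<forall>u\<in>T. E v u \<longrightarrow> u \<in> UT}"
  define rw where "rw = (\<lambda>v. (\<chi> u. if u \<in> UT then B$v$u else 0) :: real^'u)"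
  have Bnz: "E v u" if "B$v$u \<noteq> 0" for v u using sg that unfolding signed_adjacency_def by auto
  have claimA: "a v0 = 0" if s: "(\<Sum>v\<in>I'. a v *\<^sub>R rw v) = 0" and v0: "v0 \<in> I'" for a v0
  proof -
    define y :: "real^'v" where "y = (\<chi> v. if v \<in> I' then a v else 0)"
    have iy: "inner y (column u B) = (\<Sum>v\<in>I'. a v * B$v$u)" for u
    proof -
      have "inner y (column u B) = (\<Sum>v\<in>UNIV. y$v * B$v$u)"
        by (simp add: inner_vec_def column_def)
      also have "\<dots> = (\<Sum>v\<in>I'. a v * B$v$u)"
        by (rule sum.mono_neutral_cong_right) (auto simp: y_def)
      finally show ?thesis .
    qed
    have yT: "inner y (column u B) = 0" if uT: "u \<in> T" for u
    proof (cases "u \<in> UT")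
      case True
      have "(\<Sum>v\<in>I'. a v *\<^sub>R rw v)$u = (\<Sum>v\<in>I'. a v * B$v$u)"
        using True by (simp add: rw_def)
      then show ?thesis using s iy by simp
    next
      case False
      have "a v * B$v$u = 0" if "v \<in> I'" for v
      proof -
        have "\<not> E v u" using that uT False by (auto simp: I'_def)
        then show ?thesis using Bnz by (metis mult_zero_right)
      qed
      then have "(\<Sum>v\<in>I'. a v * B$v$u) = 0" by (intro sum.neutral) blast
      then show ?thesis using iy by simp
    qed
    have "inner y (column w B) = 0" for w
    proof (rule cols_span[of T B y w])
      show "card T = rank B" by (rule ct)
      show "a' u0 = 0" if "(\<Sum>u\<in>T. a' u *\<^sub>R column u B) = 0" "u0 \<in> T" for a' u0
        using cind that by blast
      show "inner y (column u B) = 0" if "u \<in> T" for u using yT that by blast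
    qed
    then have "(\<Sum>v\<in>I'. a v * B$v$w) = 0" for w using iy by simp
    moreover have "card I' < d" using cVT card_mono[of VT I'] by (auto simp: I'_def)
    ultimately show ?thesis using private_col[OF C4 breg sg, of I' a v0] v0 by blast
  qed
  have rwsupp: "x$u = 0" if "x \<in> rw ` VT" "u \<notin> UT" for x u
    using that by (auto simp: rw_def)

  let ?h = "tree_height W A rt"
  have hdef: "?h = Max (\<delta> ` W)" by (simp add: tree_height_def \<delta>_def)
  have hle: "?h \<le> r" unfolding hdef using reach(2) rtW by (intro Max.boundedI) auto
  have hr: "?h = r"
  proof (rule ccontr)
    assume "?h \<noteq> r"
    then have hlt: "?h < r" using hle by simp
    have dlt: "\<delta> x < r" if "x \<in> W" for x
    proof -
      have "\<delta> x \<le> Max (\<delta> ` W)" by (rule Max_ge) (simp_all add: that)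
      then show ?thesis using hlt hdef by linarith
    qed
    have IV: "I' = VT"
    proof -
      have "u \<in> UT" if "v \<in> VT" "u \<in> T" "E v u" for v u
      proof -
        have "A (Inl v) (Inr u)" using that by (simp add: A_def)
        then show ?thesis using ext[of "Inl v" "Inr u"] dlt[of "Inl v"] that(1) by (auto simp: VT_def UT_def)
      qed
      then show ?thesis by (auto simp: I'_def)
    qed
    have fi: "inj_on rw VT" "independent (rw ` VT)"
      using fam_indep[of VT rw] claimA IV by auto
    have sp: "rw ` VT \<subseteq> span ((\<lambda>u. axis u 1) ` UT)"
    proof
      fix x assume x: "x \<in> rw ` VT"
      have "x = (\<Sum>u\<in>UNIV. x$u *s axis u (1::real))" by (simp add: basis_expansion)
      also have "\<dots> = (\<Sum>u\<in>UT. x$u *\<^sub>R axis u 1)"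
        using rwsupp[OF x] by (intro sum.mono_neutral_cong_right) (auto simp: scalar_mult_eq_scaleR)
      finally have xe: "x = (\<Sum>u\<in>UT. x$u *\<^sub>R axis u 1)" .
      show "x \<in> span ((\<lambda>u. axis u 1) ` UT)"
        by (subst xe) (intro span_sum span_scale span_base, auto)
    qed
    have "card (rw ` VT) \<le> card ((\<lambda>u. axis u (1::real)) ` UT)"
      using independent_span_bound[OF _ fi(2) sp] by simp
    also have "\<dots> \<le> card UT" by (rule card_image_le) simp
    finally have "card VT \<le> card UT" using card_image[OF fi(1)] by simp
    with UTlt show False by simp
  qed

  have Isub: "I_set W A rt \<subseteq> Inl ` I'"
  proof
    fix x assume x: "x \<in> I_set W A rt"
    then have "x \<in> Inl ` VT" using ev by (simp add: I_set_def)
    then obtain v where v: "x = Inl v" "v \<in> VT" by blast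
    have dl: "\<delta> x < r" using x hr by (simp add: I_set_def \<delta>_def)
    have "u \<in> UT" if "u \<in> T" "E v u" for u
    proof -
      have "A (Inl v) (Inr u)" using that by (simp add: A_def)
      then show ?thesis using ext[of "Inl v" "Inr u"] dl v by (auto simp: VT_def UT_def)
    qed
    then show "x \<in> Inl ` I'" using v by (auto simp: I'_def)
  qed
  define N :: "real^'u^'v" where "N = (\<chi> v. if v \<in> VT then rw v else 0)"
  have rowsN: "span (rows N) = span (rw ` VT)"
  proof -
    have "rows N \<subseteq> insert 0 (rw ` VT)" by (auto simp: rows_def row_def N_def)
    then have a: "span (rows N) \<subseteq> span (rw ` VT)" by (metis span_insert_0 span_mono)
    have "rw ` VT \<subseteq> rows N" by (auto simp: rows_def row_def N_def vec_eq_iff intro!: exI)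
    then have "span (rw ` VT) \<subseteq> span (rows N)" by (rule span_mono)
    with a show ?thesis by blast
  qed
  have colN: "column u N = column u B" if "u \<in> UT" for u
  proof -
    have "B$v$u = 0" if "v \<notin> VT" for v
      using colsupp[OF \<open>u \<in> UT\<close>] Bnz that by blast
    then show ?thesis using that by (auto simp: column_def N_def rw_def vec_eq_iff)
  qed
  have colN0: "column u N = 0" if "u \<notin> UT" for u
    using that by (auto simp: column_def N_def rw_def vec_eq_iff)
  have colsN: "span (columns N) = span ((\<lambda>u. column u B) ` UT)"
  proof -
    have "columns N \<subseteq> insert 0 ((\<lambda>u. column u B) ` UT)"
      using colN colN0 by (auto simp: columns_def)
    then have a: "span (columns N) \<subseteq> span ((\<lambda>u. column u B) ` UT)" by (metis span_insert_0 span_mono)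
    have "(\<lambda>u. column u B) ` UT \<subseteq> columns N"
    proof
      fix x assume "x \<in> (\<lambda>u. column u B) ` UT"
      then obtain u where "u \<in> UT" "x = column u B" by blast
      then have "x = column u N" using colN by simp
      then show "x \<in> columns N" unfolding columns_def by blast
    qed
    then have "span ((\<lambda>u. column u B) ` UT) \<subseteq> span (columns N)" by (rule span_mono)
    with a show ?thesis by blast
  qed
  have fiU: "inj_on (\<lambda>u. column u B) UT" "independent ((\<lambda>u. column u B) ` UT)"
  proof -
    have "a u0 = 0" if s: "(\<Sum>u\<in>UT. a u *\<^sub>R column u B) = 0" and u0: "u0 \<in> UT" for a u0
    proof -
      let ?a = "\<lambda>u. if u \<in> UT then a u else 0"
      have "(\<Sum>u\<in>T. ?a u *\<^sub>R column u B) = (\<Sum>u\<in>UT. a u *\<^sub>R column u B)"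
        using UTT by (intro sum.mono_neutral_cong_right) auto
      then have "?a u0 = 0" using cind[of ?a u0] s u0 UTT by simp
      then show ?thesis using u0 by simp
    qed
    then show "inj_on (\<lambda>u. column u B) UT" "independent ((\<lambda>u. column u B) ` UT)"
      using fam_indep[of UT "\<lambda>u. column u B"] by auto
  qed
  have dimVT: "dim (rw ` VT) = card UT"
  proof -
    have "dim (rw ` VT) = dim (rows N)" using rowsN span_eq_dim by metis
    also have "\<dots> = dim (columns N)" using row_rank_def column_rank_def by metis
    also have "\<dots> = dim ((\<lambda>u. column u B) ` UT)" using colsN span_eq_dim by metis
    also have "\<dots> = card UT" using fiU by (simp add: dim_eq_card_independent card_image)
    finally show ?thesis .
  qed
  have fiI: "inj_on rw I'" "independent (rw ` I')"
    using fam_indep[of I' rw] claimA by auto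
  have I'VT: "I' \<subseteq> VT" by (auto simp: I'_def)
  obtain Bs where Bs: "rw ` I' \<subseteq> Bs" "Bs \<subseteq> rw ` VT" "independent Bs" "rw ` VT \<subseteq> span Bs"
    using maximal_independent_subset_extend[of "rw ` I'" "rw ` VT"] fiI(2) I'VT by blast
  have cBs: "card Bs = card UT"
  proof -
    have "span Bs = span (rw ` VT)"
      using Bs(2,4) span_mono span_span by (metis subset_antisym span_minimal subspace_span)
    then have "dim Bs = dim (rw ` VT)" by (rule span_eq_dim)
    then show ?thesis using dimVT dim_eq_card_independent[OF Bs(3)] by simp
  qed
  obtain \<tau> where tau: "bij_betw \<tau> Bs UT" "\<And>x. x \<in> Bs \<Longrightarrow> x$(\<tau> x) \<noteq> 0"
    using transversal[OF Bs(3) _ cBs] rwsupp Bs(2) by blast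
  define g where "g = inv_into VT rw"
  define R where "R = I' \<union> g ` (Bs - rw ` I')"
  have RVT: "R \<subseteq> VT"
  proof -
    have "g y \<in> VT" if "y \<in> Bs" for y using Bs(2) that by (auto simp: g_def inv_into_into)
    then show ?thesis using I'VT by (auto simp: R_def)
  qed
  have rwR: "rw ` R = Bs"
  proof -
    have "rw (g y) = y" if "y \<in> Bs" for y using Bs(2) that by (auto simp: g_def f_inv_into_f)
    then have "rw ` g ` (Bs - rw ` I') = Bs - rw ` I'" by (force simp: image_image)
    then have "rw ` R = rw ` I' \<union> (Bs - rw ` I')" unfolding R_def image_Un by simp
    then show ?thesis using Bs(1) by blast
  qed
  have injR: "inj_on rw R"
  proof (rule eq_card_imp_inj_on)
    show "finite R" by simp
    have "card R \<le> card I' + card (g ` (Bs - rw ` I'))" unfolding R_def by (rule card_Un_le)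
    also have "\<dots> \<le> card (rw ` I') + card (Bs - rw ` I')"
      using card_image[OF fiI(1)] card_image_le[of "Bs - rw ` I'" g] independent_imp_finite[OF Bs(3)] by simp
    also have "\<dots> = card Bs" using Bs(1) card_Diff_subset[of "rw ` I'" Bs] independent_imp_finite[OF Bs(3)]
      by (simp add: card_mono)
    finally have "card R \<le> card (rw ` R)" using rwR by simp
    then show "card (rw ` R) = card R" using card_image_le[of R rw] by simp
  qed
  define \<sigma> where "\<sigma> = \<tau> \<circ> rw"
  have sig: "bij_betw \<sigma> R UT" unfolding \<sigma>_def
    using bij_betw_trans[of rw R Bs \<tau> UT] injR rwR tau(1) by (simp add: bij_betw_def)
  have sigB: "B$v$(\<sigma> v) \<noteq> 0" "\<sigma> v \<in> UT" if "v \<in> R" for v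
  proof -
    show su: "\<sigma> v \<in> UT" using sig that by (auto simp: bij_betw_def)
    have "rw v \<in> Bs" using rwR that by blast
    then have "(rw v)$(\<sigma> v) \<noteq> 0" using tau(2) by (simp add: \<sigma>_def)
    then show "B$v$(\<sigma> v) \<noteq> 0" using su by (simp add: rw_def)
  qed
  define M where "M = (\<lambda>v. {Inl v, Inr (\<sigma> v)}) ` R"
  have matching: "is_matching W A M"
    unfolding is_matching_def
  proof
    show "M \<subseteq> graph_edges W A"
    proof
      fix e assume "e \<in> M"
      then obtain v where v: "v \<in> R" "e = {Inl v, Inr (\<sigma> v)}" by (auto simp: M_def)
      have "Inl v \<in> W" using RVT v(1) by (auto simp: VT_def)
      moreover have "Inr (\<sigma> v) \<in> W" using sigB(2)[OF v(1)] by (simp add: UT_def)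
      moreover have "A (Inl v) (Inr (\<sigma> v))"
        using UTT[OF sigB(2)[OF v(1)]] Bnz[OF sigB(1)[OF v(1)]] by (simp add: A_def)
      ultimately show "e \<in> graph_edges W A" using v(2) by (auto simp: graph_edges_def)
    qed
    show "\<forall>e1\<in>M. \<forall>e2\<in>M. e1 \<noteq> e2 \<longrightarrow> e1 \<inter> e2 = {}"
    proof (intro ballI impI)
      fix e1 e2 assume e: "e1 \<in> M" "e2 \<in> M" "e1 \<noteq> e2"
      then obtain v1 v2 where v: "v1 \<in> R" "v2 \<in> R" "e1 = {Inl v1, Inr (\<sigma> v1)}" "e2 = {Inl v2, Inr (\<sigma> v2)}"
        by (auto simp: M_def)
      then have "v1 \<noteq> v2" using e(3) by auto
      then have "\<sigma> v1 \<noteq> \<sigma> v2" using sig v(1,2) by (auto simp: bij_betw_def inj_on_def)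
      then show "e1 \<inter> e2 = {}" using v(3,4) \<open>v1 \<noteq> v2\<close> by auto
    qed
  qed
  have sat: "\<forall>x\<in>I_set W A rt \<union> odd_vertices W A rt. \<exists>e\<in>M. x \<in> e"
  proof
    fix x assume "x \<in> I_set W A rt \<union> odd_vertices W A rt"
    then consider "x \<in> Inl ` I'" | "x \<in> Inr ` UT" using Isub od by blast
    then show "\<exists>e\<in>M. x \<in> e"
    proof cases
      case 1
      then obtain v where "v \<in> I'" "x = Inl v" by blast
      then show ?thesis by (auto simp: M_def R_def)
    next
      case 2
      then obtain u where u: "u \<in> UT" "x = Inr u" by blast
      then obtain v where "v \<in> R" "\<sigma> v = u" using sig by (auto simp: bij_betw_def)
      then show ?thesis using u by (auto simp: M_def)
    qed
  qed
  have "M \<in> {M. is_matching W A M \<and> (\<forall>x\<in>I_set W A rt \<union> odd_vertices W A rt. \<exists>e\<in>M. x \<in> e)}"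
    using matching sat by blast
  then have "m_count (I_set W A rt) W A rt > 0"
    unfolding m_count_def by (subst card_gt_0_iff) auto
  then show ?thesis using hr by (simp add: W_def A_def rt_def)
qed


end
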